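(* Let $\mathcal{T}$ be an MPQ-tree of an interval graph $G$, and let $S_1,\dots,S_k$ be the sections of some Q-node of $\mathcal{T}$; set $S_0=S_{k+1}=\emptyset$. For every pair of indices $1\le a<b\le k$ with $(a,b)\neq(1,k)$ there exists a vertex $$v\in\big((S_{a-1}\cap S_a)\setminus S_b\big)\cup\big((S_b\cap S_{b+1})\setminus S_a\big).$$
   Context: An MPQ-tree of an interval graph $G=(V,E)$, $V=\{1,\dots,n\}$, is a rooted plane tree whose nodes are P-nodes and Q-nodes. Each P-node carries a (possibly empty) set of vertices. A Q-node has $k\ge 3$ ordered positions $1,\dots,k$; position $i$ carries a set $S_i\subseteq V$ (the $i$-th section) and a child subtree $T_i$, which may be empty. Every vertex $v$ is assigned to exactly one node $node(v)$: either $v$ lies in the set of the P-node $node(v)$, or $node(v)$ is a Q-node and $v$ lies exactly in the sections $S_{l(v)},\dots,S_{r(v)}$ of it, with $l(v)<r(v)$. For a node with child subtrees $T_1,\dots,T_k$, $V_i$ denotes the set of vertices assigned to nodes of $T_i$ ($V_i=\emptyset$ if $T_i$ is empty). The maximal cliques of $G$ are in bijection with the descending paths from the root which at a P-node continue into one of its children (stopping if there is none) and at a Q-node choose a position $i$ and continue into $T_i$ (stopping if $T_i$ is empty); the clique is the union of the sets of the visited P-nodes and the chosen sections. Reading these cliques left to right gives a linear order of the maximal cliques, and the orders obtained this way after arbitrarily permuting children of P-nodes and reversing the positions of Q-nodes are exactly the orders of the maximal cliques of $G$ in which the cliques containing any fixed vertex are consecutive. Moreover, for every Q-node with sections $S_1,\dots,S_k$: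 (a) $V_1\neq\emptyset$ and $V_k\ne\emptyset$; (b) $S_1\subseteq S_2$ and $S_k\subseteq S_{k-1}$; (c) $S_{i-1}\cap S_i\neq\emptyset$ for $2\le i\le k$; (d) $S_{i-1}\neq S_i$ for $2\le i\le k$; (e) $(S_i\cap S_{i+1})\setminus S_1\neq\emptyset$ and $(S_{i-1}\cap S_i)\setminus S_k\neq\emptyset$ for $2\le i\le k-1$; (f) $(S_{i-1}\cup V_{i-1})\setminus S_i\neq\emptyset$ and $(S_i\cup V_i)\setminus S_{i-1}\neq\emptyset$ for $2\le i\le k$; and further (g) no empty P-node has an empty P-node as its parent, (h) no P-node has exactly one child whose root is a P-node, (i) every child subtree of a P-node is nonempty. *)

theory Defs
  imports Complex_Main "HOL-Library.Multiset"
begin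

definition graph :: "'v set \<Rightarrow> ('v \<times> 'v) set \<Rightarrow> bool" where
  "graph V E \<longleftrightarrow> finite V \<and> E \<subseteq> V \<times> V \<and> sym E \<and> irrefl E"

definition interval_graph :: "'v set \<Rightarrow> ('v \<times> 'v) set \<Rightarrow> bool" where
  "interval_graph V E \<longleftrightarrow> graph V E \<and>
     (\<exists>I :: 'v \<Rightarrow> real \<times> real. (\<forall>v\<in>V. fst (I v) \<le> snd (I v)) \<and>
        (\<forall>u\<in>V. \<forall>v\<in>V. u \<noteq> v \<longrightarrow>
            ((u, v) \<in> E \<longleftrightarrow> max (fst (I u)) (fst (I v)) \<le> min (snd (I u)) (snd (I v)))))"

definition is_clique :: "'v set \<Rightarrow> ('v \<times> 'v) set \<Rightarrow> 'v set \<Rightarrow> bool" where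
  "is_clique V E C \<longleftrightarrow> C \<subseteq> V \<and> (\<forall>u\<in>C. \<forall>v\<in>C. u \<noteq> v \<longrightarrow> (u, v) \<in> E)"

definition max_cliques :: "'v set \<Rightarrow> ('v \<times> 'v) set \<Rightarrow> 'v set set" where
  "max_cliques V E = {C. is_clique V E C \<and> (\<forall>D. is_clique V E D \<and> C \<subseteq> D \<longrightarrow> D = C)}"

definition consec_clique_order :: "'v set \<Rightarrow> ('v \<times> 'v) set \<Rightarrow> 'v set list \<Rightarrow> bool" where
  "consec_clique_order V E xs \<longleftrightarrow> distinct xs \<and> set xs = max_cliques V E \<and>
     (\<forall>v i j m. i \<le> m \<and> m \<le> j \<and> j < length xs \<and> v \<in> xs ! i \<and> v \<in> xs ! j \<longrightarrow> v \<in> xs ! m)"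

text \<open>A P-node carries a vertex set and a list of (nonempty) child subtrees;
  a Q-node carries the list of its positions, each a section and a possibly empty child subtree.\<close>
datatype 'v mpq = PNode "'v set" "'v mpq list" | QNode "('v set \<times> 'v mpq option) list"

fun vs :: "'v mpq \<Rightarrow> 'v set" where
  "vs (PNode A cs) = A \<union> \<Union> (set (map vs cs))"
| "vs (QNode ps) = \<Union> (set (map (\<lambda>p. fst p \<union> (case snd p of None \<Rightarrow> {} | Some t \<Rightarrow> vs t)) ps))"

definition vso :: "'v mpq option \<Rightarrow> 'v set" where
  "vso t = (case t of None \<Rightarrow> {} | Some c \<Rightarrow> vs c)"

fun nodes :: "'v mpq \<Rightarrow> 'v mpq set" where
  "nodes (PNode A cs) = insert (PNode A cs) (\<Union> (set (map nodes cs)))"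
| "nodes (QNode ps) = insert (QNode ps)
     (\<Union> (set (map (\<lambda>p. case snd p of None \<Rightarrow> {} | Some t \<Rightarrow> nodes t) ps)))"

text \<open>Maximal cliques read off the root-to-leaf paths, from left to right.\<close>
fun cliques :: "'v mpq \<Rightarrow> 'v set list" where
  "cliques (PNode A cs) = (if cs = [] then [A] else map ((\<union>) A) (concat (map cliques cs)))"
| "cliques (QNode ps) = concat (map (\<lambda>p. case snd p of None \<Rightarrow> [fst p]
                                         | Some t \<Rightarrow> map ((\<union>) (fst p)) (cliques t)) ps)"

text \<open>Section i (1-based) of a Q-node; sections 0 and k+1 are empty.\<close>
definition qsec :: "('v set \<times> 'v mpq option) list \<Rightarrow> nat \<Rightarrow> 'v set" where
  "qsec ps i = (if 1 \<le> i \<and> i \<le> length ps then fst (ps ! (i - 1)) else {})"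

text \<open>Child subtree at position i (1-based) of a Q-node, and its vertex set V_i.\<close>
definition qchildV :: "('v set \<times> 'v mpq option) list \<Rightarrow> nat \<Rightarrow> 'v set" where
  "qchildV ps i = (if 1 \<le> i \<and> i \<le> length ps then vso (snd (ps ! (i - 1))) else {})"

fun is_empty_pnode :: "'v mpq \<Rightarrow> bool" where
  "is_empty_pnode (PNode A cs) = (A = {})"
| "is_empty_pnode (QNode ps) = False"

fun node_ok :: "'v mpq \<Rightarrow> bool" where
  "node_ok (PNode A cs) \<longleftrightarrow>
     (\<forall>i < length cs. A \<inter> vs (cs ! i) = {}) \<and>
     (\<forall>i < length cs. \<forall>j < length cs. i \<noteq> j \<longrightarrow> vs (cs ! i) \<inter> vs (cs ! j) = {}) \<and>
     \<comment> \<open>(g)\<close>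
     (A = {} \<longrightarrow> (\<forall>c \<in> set cs. \<not> is_empty_pnode c)) \<and>
     \<comment> \<open>(h)\<close>
     (\<not> (\<exists>B ds. cs = [PNode B ds]))"
| "node_ok (QNode ps) \<longleftrightarrow>
     (let k = length ps; S = qsec ps; W = qchildV ps in
       k \<ge> 3 \<and>
       \<comment> \<open>vertices of children are disjoint from the sections and from each other\<close>
       (\<forall>i\<in>{1..k}. \<forall>j\<in>{1..k}. W i \<inter> S j = {}) \<and>
       (\<forall>i\<in>{1..k}. \<forall>j\<in>{1..k}. i \<noteq> j \<longrightarrow> W i \<inter> W j = {}) \<and>
       \<comment> \<open>every vertex of the Q-node lies exactly in sections l(v)..r(v) with l(v) < r(v)\<close>
       (\<forall>v \<in> (\<Union>i\<in>{1..k}. S i). \<exists>l r. 1 \<le> l \<and> l < r \<and> r \<le> k \<and>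
            (\<forall>i\<in>{1..k}. v \<in> S i \<longleftrightarrow> l \<le> i \<and> i \<le> r)) \<and>
       \<comment> \<open>(a)\<close>
       W 1 \<noteq> {} \<and> W k \<noteq> {} \<and>
       \<comment> \<open>(b)\<close>
       S 1 \<subseteq> S 2 \<and> S k \<subseteq> S (k - 1) \<and>
       \<comment> \<open>(c), (d)\<close>
       (\<forall>i\<in>{2..k}. S (i - 1) \<inter> S i \<noteq> {} \<and> S (i - 1) \<noteq> S i) \<and>
       \<comment> \<open>(e)\<close>
       (\<forall>i\<in>{2..k-1}. (S i \<inter> S (i + 1)) - S 1 \<noteq> {} \<and> (S (i - 1) \<inter> S i) - S k \<noteq> {}) \<and>
       \<comment> \<open>(f)\<close>
       (\<forall>i\<in>{2..k}. (S (i - 1) \<union> W (i - 1)) - S i \<noteq> {} \<and> (S i \<union> W i) - S (i - 1) \<noteq> {}))"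

inductive reorder :: "'v mpq \<Rightarrow> 'v mpq \<Rightarrow> bool" where
  reorderP: "list_all2 reorder cs ds \<Longrightarrow> mset es = mset ds \<Longrightarrow> reorder (PNode A cs) (PNode A es)"
| reorderQ: "list_all2 (rel_prod (=) (rel_option reorder)) ps qs \<Longrightarrow> rs = qs \<or> rs = rev qs
    \<Longrightarrow> reorder (QNode ps) (QNode rs)"
monos list_all2_mono option.rel_mono prod.rel_mono

text \<open>An MPQ-tree of the graph (V, E).  Condition (i) holds by construction
  (children of P-nodes are trees, not empty subtrees).\<close>
definition is_MPQ_tree :: "'v set \<Rightarrow> ('v \<times> 'v) set \<Rightarrow> 'v mpq \<Rightarrow> bool" where
  "is_MPQ_tree V E T \<longleftrightarrow> graph V E \<and> vs T = V \<and> (\<forall>t \<in> nodes T. node_ok t) \<and>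
     distinct (cliques T) \<and> set (cliques T) = max_cliques V E \<and>
     {cliques T' | T'. reorder T T'} = {xs. consec_clique_order V E xs}"

end

theory Submission
  imports Defs
begin
definition blk :: "('v set \<times> 'v mpq option) \<Rightarrow> 'v set list" where
  "blk p = (case snd p of None \<Rightarrow> [fst p] | Some t \<Rightarrow> map ((\<union>) (fst p)) (cliques t))"

lemma cliques_Q: "cliques (QNode ps) = concat (map blk ps)"
  unfolding blk_def[abs_def] by simp

lemma nodes_self: "T \<in> nodes T"
  by (cases T) auto

lemma nodes_trans: "s \<in> nodes t \<Longrightarrow> nodes s \<subseteq> nodes t"
proof (induction t rule: nodes.induct)
  case (1 A cs)
  then show ?case by auto
next
  case (2 ps)
  show ?case
  proof (cases "s = QNode ps")
    case False
    then obtain p t where p: "p \<in> set ps" "snd p = Some t" "s \<in> nodes t"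
      using 2(2) by (auto split: option.splits)
    then have "nodes s \<subseteq> nodes t" using 2(1)[of p t] by blast
    moreover have "nodes t \<subseteq> nodes (QNode ps)" using p by force
    ultimately show ?thesis by blast
  qed simp
qed

lemma vs_mono: "s \<in> nodes t \<Longrightarrow> vs s \<subseteq> vs t"
proof (induction t rule: nodes.induct)
  case (1 A cs)
  show ?case
  proof (cases "s = PNode A cs")
    case False
    then obtain c where c: "c \<in> set cs" "s \<in> nodes c" using 1(2) by auto
    then have "vs s \<subseteq> vs c" using 1(1) by blast
    moreover have "vs c \<subseteq> vs (PNode A cs)" using c by auto
    ultimately show ?thesis by blast
  qed simp
next
  case (2 ps)
  show ?case
  proof (cases "s = QNode ps")
    case False
    then obtain p t where p: "p \<in> set ps" "snd p = Some t" "s \<in> nodes t"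
      using 2(2) by (auto split: option.splits)
    then have "vs s \<subseteq> vs t" using 2(1)[of p t] by blast
    moreover have "vs t \<subseteq> vs (QNode ps)" using p by force
    ultimately show ?thesis by blast
  qed simp
qed

lemma cliques_sub: "c \<in> set (cliques t) \<Longrightarrow> c \<subseteq> vs t"
proof (induction t arbitrary: c rule: nodes.induct)
  case (1 A cs)
  show ?case
  proof (cases "cs = []")
    case False
    then obtain d x where "x \<in> set cs" "d \<in> set (cliques x)" "c = A \<union> d" using 1(2) by auto
    then show ?thesis using 1(1) by fastforce
  qed (use 1 in auto)
next
  case (2 ps)
  obtain p where p: "p \<in> set ps" "c \<in> set (blk p)" using 2(2) unfolding cliques_Q by auto
  show ?case
  proof (cases "snd p")
    case None
    then show ?thesis using p by (force simp: blk_def)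
  next
    case (Some t)
    then obtain d where "d \<in> set (cliques t)" "c = fst p \<union> d" using p by (auto simp: blk_def)
    then show ?thesis using 2(1)[OF p(1) Some] p(1) Some by force
  qed
qed

lemma cliques_ne: "\<forall>s\<in>nodes t. node_ok s \<Longrightarrow> cliques t \<noteq> []"
proof (induction t rule: nodes.induct)
  case (1 A cs)
  show ?case
  proof (cases cs)
    case (Cons c cs')
    have "c \<in> set cs" using Cons by simp
    moreover have "\<forall>s\<in>nodes c. node_ok s" using 1(2) Cons by auto
    ultimately have "cliques c \<noteq> []" using 1(1) by blast
    then show ?thesis using Cons by simp
  qed simp
next
  case (2 ps)
  have "node_ok (QNode ps)" using 2(2) by simp
  then have "length ps \<ge> 3" by (simp add: Let_def)
  then obtain p ps' where ps: "ps = p # ps'" by (cases ps) auto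
  have "blk p \<noteq> []"
  proof (cases "snd p")
    case (Some t)
    have "\<forall>s\<in>nodes t. node_ok s" using 2(2) ps Some by auto
    then have "cliques t \<noteq> []" using 2(1)[of p t] ps Some by simp
    then show ?thesis using Some by (simp add: blk_def)
  qed (simp add: blk_def)
  then show ?case unfolding cliques_Q ps by simp
qed

definition idx :: "bool list \<Rightarrow> bool" where
  "idx bs \<longleftrightarrow> (\<forall>i m j. i \<le> m \<and> m \<le> j \<and> j < length bs \<and> bs!i \<and> bs!j \<longrightarrow> bs!m)"

definition cb :: "bool list \<Rightarrow> bool" where
  "cb bs \<longleftrightarrow> (\<exists>p q r. bs = replicate p False @ replicate q True @ replicate r False)"

lemma cb_imp_idx: "cb bs \<Longrightarrow> idx bs"
  unfolding cb_def idx_def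
  by (auto simp: nth_append nth_replicate split: if_splits)

lemma allF: "True \<notin> set B \<Longrightarrow> B = replicate (length B) False"
  by (induction B) auto

lemma allT: "False \<notin> set B \<Longrightarrow> B = replicate (length B) True"
  by (induction B) auto

lemma idx_tl: "idx (x # ys) \<Longrightarrow> idx ys"
  unfolding idx_def
proof (intro allI impI)
  fix i m j assume A: "\<forall>i m j. i \<le> m \<and> m \<le> j \<and> j < length (x # ys) \<and> (x # ys) ! i \<and> (x # ys) ! j \<longrightarrow> (x # ys) ! m"
    and h: "i \<le> m \<and> m \<le> j \<and> j < length ys \<and> ys ! i \<and> ys ! j"
  from A[rule_format, of "Suc i" "Suc m" "Suc j"] h show "ys ! m" by simp
qed

lemma idx_imp_cb: "idx bs \<Longrightarrow> cb bs"
proof (induction bs)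
  case Nil
  then show ?case unfolding cb_def by (rule_tac x=0 in exI) simp
next
  case (Cons x ys)
  then obtain p q r where ys: "ys = replicate p False @ replicate q True @ replicate r False"
    using idx_tl cb_def by blast
  show ?case
  proof (cases x)
    case False
    then show ?thesis unfolding cb_def ys
      by (rule_tac x="Suc p" in exI, rule_tac x=q in exI, rule_tac x=r in exI) simp
  next
    case True
    show ?thesis
    proof (cases "p = 0")
      case True
      then show ?thesis unfolding cb_def ys using \<open>x\<close>
        by (rule_tac x=0 in exI, rule_tac x="Suc q" in exI, rule_tac x=r in exI) simp
    next
      case False
      show ?thesis
      proof (cases "q = 0")
        case True
        then show ?thesis unfolding cb_def ys using \<open>x\<close>
          by (rule_tac x=0 in exI, rule_tac x="1" in exI, rule_tac x="p+r" in exI)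
             (simp add: replicate_add)
      next
        case q: False
        have "(x#ys) ! 0" using \<open>x\<close> by simp
        moreover have "(x#ys) ! (Suc p)" using q by (simp add: ys nth_append)
        moreover have "\<not> (x#ys) ! 1" using \<open>p \<noteq> 0\<close> by (simp add: ys nth_append)
        moreover have "Suc p < length (x#ys)" using q by (simp add: ys)
        ultimately show ?thesis using Cons(2) unfolding idx_def
          by (metis One_nat_def Suc_le_mono \<open>p \<noteq> 0\<close> le0 less_imp_le_nat not_gr_zero)
      qed
    qed
  qed
qed

lemma cb_idx: "cb bs \<longleftrightarrow> idx bs"
  using cb_imp_idx idx_imp_cb by blast

lemma idx_infix: "idx (A @ B @ C) \<Longrightarrow> idx B"
  unfolding idx_def
proof (intro allI impI)
  fix i m j assume H: "\<forall>i m j. i \<le> m \<and> m \<le> j \<and> j < length (A @ B @ C) \<and> (A @ B @ C) ! i \<and> (A @ B @ C) ! j \<longrightarrow> (A @ B @ C) ! m"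
    and h: "i \<le> m \<and> m \<le> j \<and> j < length B \<and> B ! i \<and> B ! j"
  from H[rule_format, of "length A + i" "length A + m" "length A + j"] h
  show "B ! m" by (simp add: nth_append)
qed

lemma cb_infix: "cb (A @ B @ C) \<Longrightarrow> cb B"
  using idx_infix cb_idx by blast

lemma cb_pad: "cb B \<Longrightarrow> cb (replicate n False @ B @ replicate m False)"
  unfolding cb_def
  by (auto simp: replicate_add[symmetric]) (metis append.assoc replicate_add)

lemma cb_rev_mid:
  assumes "cb (A @ B @ C)"
    and "True \<in> set A \<and> True \<in> set B \<longrightarrow> False \<notin> set B"
    and "True \<in> set C \<and> True \<in> set B \<longrightarrow> False \<notin> set B"
  shows "cb (A @ rev B @ C)"
proof (cases "True \<in> set B \<and> False \<in> set B")
  case True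
  then have A: "A = replicate (length A) False" and C: "C = replicate (length C) False"
    using assms allF by blast+
  have "cb B" using assms(1) cb_infix by blast
  then obtain p q r where "B = replicate p False @ replicate q True @ replicate r False"
    unfolding cb_def by blast
  then have "cb (rev B)" unfolding cb_def by (rule_tac x=r in exI, rule_tac x=q in exI, rule_tac x=p in exI) simp
  then show ?thesis using cb_pad A C by metis
next
  case False
  then have "rev B = B" using allF allT by (metis rev_replicate)
  then show ?thesis using assms by simp
qed

lemma cb_concat_single:
  "(\<forall>x\<in>set xs. cb x) \<Longrightarrow> length (filter (\<lambda>x. True \<in> set x) xs) \<le> 1 \<Longrightarrow> cb (concat xs)"
proof (induction xs)
  case Nil
  then show ?case unfolding cb_def by (rule_tac x=0 in exI) simp
next
  case (Cons x xs)
  show ?case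
  proof (cases "True \<in> set x")
    case True
    then have "filter (\<lambda>x. True \<in> set x) xs = []" using Cons(3) by simp
    then have "True \<notin> set (concat xs)" by (simp add: filter_empty_conv)
    then have "concat xs = replicate (length (concat xs)) False" using allF by blast
    moreover have "cb x" using Cons by simp
    ultimately show ?thesis using cb_pad[of x 0] by (metis append_Nil concat.simps(2) replicate_0)
  next
    case False
    then have "x = replicate (length x) False" using allF by blast
    moreover have "cb (concat xs)" using Cons False by simp
    ultimately show ?thesis using cb_pad[of _ _ 0] by (metis append_Nil2 concat.simps(2) replicate_0)
  qed
qed

lemma qsec_Suc: "j < length qs \<Longrightarrow> qsec qs (Suc j) = fst (qs ! j)"
  by (simp add: qsec_def)
lemma qchildV_Suc: "j < length qs \<Longrightarrow> qchildV qs (Suc j) = vso (snd (qs ! j))"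
  by (simp add: qchildV_def)

lemma qok1: "node_ok (QNode qs) \<Longrightarrow> i < length qs \<Longrightarrow> j < length qs \<Longrightarrow>
   vso (snd (qs!i)) \<inter> fst (qs!j) = {}"
proof -
  assume ok: "node_ok (QNode qs)" and ij: "i < length qs" "j < length qs"
  then have "\<forall>i\<in>{1..length qs}. \<forall>j\<in>{1..length qs}. qchildV qs i \<inter> qsec qs j = {}"
    by (simp add: Let_def)
  then have "qchildV qs (Suc i) \<inter> qsec qs (Suc j) = {}" using ij by auto
  then show ?thesis using ij by (simp add: qsec_Suc qchildV_Suc)
qed

lemma qok2: "node_ok (QNode qs) \<Longrightarrow> i < length qs \<Longrightarrow> j < length qs \<Longrightarrow> i \<noteq> j \<Longrightarrow>
   vso (snd (qs!i)) \<inter> vso (snd (qs!j)) = {}"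
proof -
  assume ok: "node_ok (QNode qs)" and ij: "i < length qs" "j < length qs" "i \<noteq> j"
  then have "\<forall>i\<in>{1..length qs}. \<forall>j\<in>{1..length qs}. i \<noteq> j \<longrightarrow> qchildV qs i \<inter> qchildV qs j = {}"
    by (simp add: Let_def)
  then have "qchildV qs (Suc i) \<inter> qchildV qs (Suc j) = {}" using ij by auto
  then show ?thesis using ij by (simp add: qchildV_Suc)
qed

lemma blk_sub: "c \<in> set (blk p) \<Longrightarrow> c \<subseteq> fst p \<union> vso (snd p)"
  by (auto simp: blk_def vso_def split: option.splits dest!: cliques_sub)

lemma concat_split: "j < length xs \<Longrightarrow> concat (map f xs) = concat (map f (take j xs)) @ f (xs!j) @ concat (map f (drop (Suc j) xs))"
proof -
  assume "j < length xs"
  then have "xs = take j xs @ xs!j # drop (Suc j) xs" by (rule id_take_nth_drop)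
  then have "concat (map f xs) = concat (map f (take j xs @ xs!j # drop (Suc j) xs))" by (rule arg_cong)
  also have "\<dots> = concat (map f (take j xs)) @ f (xs!j) @ concat (map f (drop (Suc j) xs))" by simp
  finally show ?thesis .
qed

lemma in_take_nth': "x \<in> set (take i xs) \<Longrightarrow> \<exists>j<length xs. j \<noteq> i \<and> x = xs!j"
  unfolding in_set_conv_nth by force
lemma in_drop_nth': "x \<in> set (drop (Suc i) xs) \<Longrightarrow> \<exists>j<length xs. j \<noteq> i \<and> x = xs!j"
  unfolding in_set_conv_nth
proof (elim exE conjE)
  fix k assume "k < length (drop (Suc i) xs)" "drop (Suc i) xs ! k = x"
  then show ?thesis by (intro exI[where x="Suc i + k"]) auto
qed

lemma map_Un_empty[simp]: "map ((\<union>) {}) xs = xs"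
  by (induction xs) auto

lemma nodes_Q_child: "p \<in> set ps \<Longrightarrow> snd p = Some t \<Longrightarrow> nodes t \<subseteq> nodes (QNode ps)"
proof -
  assume a: "p \<in> set ps" and b: "snd p = Some t"
  have "(case snd p of None \<Rightarrow> {} | Some t \<Rightarrow> nodes t) = nodes t" using b by simp
  moreover have "(case snd p of None \<Rightarrow> {} | Some t \<Rightarrow> nodes t) \<subseteq> nodes (QNode ps)" using a by auto
  ultimately show ?thesis by simp
qed

lemma decomp:
  assumes "QNode ps \<in> nodes T" "\<forall>t\<in>nodes T. node_ok t"
  shows "\<exists>pre suf U. cliques T = pre @ map ((\<union>) U) (cliques (QNode ps)) @ suf \<and>
     U \<inter> vs (QNode ps) = {} \<and> (\<forall>c \<in> set pre \<union> set suf. c \<inter> vs (QNode ps) = {}) \<and>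
     (\<forall>T'. reorder T T' \<longrightarrow> (\<exists>pre' suf' qs. cliques T' = pre' @ map ((\<union>) U) (cliques (QNode qs)) @ suf'
          \<and> reorder (QNode ps) (QNode qs)))"
  using assms
proof (induction T rule: nodes.induct)
  case (1 A cs)
  let ?Q = "vs (QNode ps)"
  have "\<exists>c\<in>set cs. QNode ps \<in> nodes c" using 1(2) by simp
  then obtain i where i: "i < length cs" "QNode ps \<in> nodes (cs!i)" by (metis in_set_conv_nth)
  let ?c = "cs!i"
  have cin: "?c \<in> set cs" using i by simp
  have "?c \<in> nodes (PNode A cs)" using cin nodes_self by fastforce
  then have okc: "\<forall>t\<in>nodes ?c. node_ok t" using 1(3) nodes_trans by blast
  obtain pre suf U where IH: "cliques ?c = pre @ map ((\<union>) U) (cliques (QNode ps)) @ suf"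
     "U \<inter> ?Q = {}" "\<forall>c \<in> set pre \<union> set suf. c \<inter> ?Q = {}"
     "\<forall>T'. reorder ?c T' \<longrightarrow> (\<exists>pre' suf' qs. cliques T' = pre' @ map ((\<union>) U) (cliques (QNode qs)) @ suf'
          \<and> reorder (QNode ps) (QNode qs))"
    using 1(1)[OF cin i(2) okc] by (elim exE conjE) iprover
  have okP: "node_ok (PNode A cs)" using 1(3) by simp
  have Qc: "?Q \<subseteq> vs ?c" using vs_mono[OF i(2)] .
  have csne: "cs \<noteq> []" using i by auto
  have eq: "cliques (PNode A cs) = map ((\<union>) A) (concat (map cliques (take i cs)) @ pre) @
      map ((\<union>) (A \<union> U)) (cliques (QNode ps)) @ map ((\<union>) A) (suf @ concat (map cliques (drop (Suc i) cs)))"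
    using csne concat_split[OF i(1), of cliques] IH(1) by (simp add: Un_assoc)
  have d1: "(A \<union> U) \<inter> ?Q = {}" using okP i(1) Qc IH(2) by auto
  have d2: "c \<inter> ?Q = {}" if "c \<in> set (map ((\<union>) A) (concat (map cliques (take i cs)) @ pre))
       \<union> set (map ((\<union>) A) (suf @ concat (map cliques (drop (Suc i) cs))))" for c
  proof -
    have AQ: "A \<inter> ?Q = {}" using okP i(1) Qc by auto
    from that obtain d where d0: "c = A \<union> d" "d \<in> set pre \<union> set suf \<or>
       (\<exists>x. x \<in> set (take i cs) \<union> set (drop (Suc i) cs) \<and> d \<in> set (cliques x))"
      by auto
    have d: "c = A \<union> d" "d \<in> set pre \<union> set suf \<or>
       (\<exists>j<length cs. j \<noteq> i \<and> d \<in> set (cliques (cs!j)))"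
    proof -
      show "c = A \<union> d" using d0(1) .
      show "d \<in> set pre \<union> set suf \<or> (\<exists>j<length cs. j \<noteq> i \<and> d \<in> set (cliques (cs!j)))"
      proof (cases "d \<in> set pre \<union> set suf")
        case False
        then obtain x where x: "x \<in> set (take i cs) \<union> set (drop (Suc i) cs)" "d \<in> set (cliques x)"
          using d0(2) by blast
        have "\<exists>j<length cs. j \<noteq> i \<and> x = cs!j" using x(1)
          by (elim UnE) (erule in_take_nth', erule in_drop_nth')
        then show ?thesis using x(2) by blast
      qed simp
    qed
    show ?thesis
    proof (cases "d \<in> set pre \<union> set suf")
      case True then show ?thesis using IH(3) AQ d(1) by auto
    next
      case False
      then obtain j where j: "j < length cs" "j \<noteq> i" "d \<in> set (cliques (cs!j))" using d by blast
      have "d \<subseteq> vs (cs!j)" using cliques_sub j(3) .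
      moreover have "vs (cs!j) \<inter> vs (cs!i) = {}" using okP j i(1) by simp
      ultimately show ?thesis using AQ d(1) Qc by blast
    qed
  qed
  have d3: "\<exists>pre' suf' qs. cliques T' = pre' @ map ((\<union>) (A \<union> U)) (cliques (QNode qs)) @ suf'
          \<and> reorder (QNode ps) (QNode qs)" if "reorder (PNode A cs) T'" for T'
    using that
  proof (cases rule: reorder.cases)
    case (reorderP ds es)
    have ri: "reorder ?c (ds!i)" using reorderP(2) i(1) list_all2_nthD by blast
    obtain pre' suf' qs where qs: "cliques (ds!i) = pre' @ map ((\<union>) U) (cliques (QNode qs)) @ suf'"
       "reorder (QNode ps) (QNode qs)" using IH(4) ri by blast
    have "ds!i \<in> set es" using reorderP(3) i(1) reorderP(2)
      by (metis list_all2_lengthD mset_eq_setD nth_mem)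
    then obtain e1 e2 where es: "es = e1 @ ds!i # e2" by (meson split_list)
    have "cliques T' = map ((\<union>) A) (concat (map cliques e1) @ pre') @ map ((\<union>) (A \<union> U)) (cliques (QNode qs)) @
       map ((\<union>) A) (suf' @ concat (map cliques e2))"
      using reorderP(1) es qs(1) by (simp add: Un_assoc del: cliques.simps(2))
    then show ?thesis using qs(2) by blast
  qed
  show ?case using eq d1 d2 d3 by blast
next
  case (2 qs0)
  let ?Q = "vs (QNode ps)"
  show ?case
  proof (cases "QNode ps = QNode qs0")
    case True
    have "\<exists>pre' suf' qs. cliques T' = pre' @ map ((\<union>) {}) (cliques (QNode qs)) @ suf'
          \<and> reorder (QNode ps) (QNode qs)" if r: "reorder (QNode qs0) T'" for T'
    proof -
      obtain rs where rs: "T' = QNode rs" using r by (cases rule: reorder.cases) auto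
      have "cliques T' = [] @ map ((\<union>) {}) (cliques (QNode rs)) @ []" by (simp add: rs del: cliques.simps)
      moreover have "reorder (QNode ps) (QNode rs)" using r rs True by simp
      ultimately show ?thesis by (intro exI[of _ "[]"] exI[of _ rs] conjI)
    qed
    then show ?thesis using True by (rule_tac x="[]" in exI, rule_tac x="[]" in exI, rule_tac x="{}" in exI) simp
  next
    case False
    then obtain j t where j: "j < length qs0" "snd (qs0!j) = Some t" "QNode ps \<in> nodes t"
      using 2(2) by (auto simp: in_set_conv_nth split: option.splits)
    let ?p = "qs0!j"
    let ?S = "fst ?p"
    have pin: "?p \<in> set qs0" using j by simp
    have tn: "t \<in> nodes (QNode qs0)" using nodes_Q_child[OF pin j(2)] nodes_self by blast
    have okt: "\<forall>s\<in>nodes t. node_ok s" using 2(3) nodes_trans[OF tn] by blast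
    obtain pre suf U where IH: "cliques t = pre @ map ((\<union>) U) (cliques (QNode ps)) @ suf"
       "U \<inter> ?Q = {}" "\<forall>c \<in> set pre \<union> set suf. c \<inter> ?Q = {}"
       "\<forall>T'. reorder t T' \<longrightarrow> (\<exists>pre' suf' qs. cliques T' = pre' @ map ((\<union>) U) (cliques (QNode qs)) @ suf'
          \<and> reorder (QNode ps) (QNode qs))"
      using 2(1)[OF pin j(2) j(3) okt] by (elim exE conjE) iprover
    have okQ: "node_ok (QNode qs0)" using 2(3) by simp
    have Qt: "?Q \<subseteq> vs t" using vs_mono[OF j(3)] .
    have Wj: "vso (snd ?p) = vs t" using j(2) by (simp add: vso_def)
    have SQ: "?S \<inter> ?Q = {}" using qok1[OF okQ j(1) j(1)] Wj Qt by auto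
    have eq: "cliques (QNode qs0) = (concat (map blk (take j qs0)) @ map ((\<union>) ?S) pre) @
        map ((\<union>) (?S \<union> U)) (cliques (QNode ps)) @ (map ((\<union>) ?S) suf @ concat (map blk (drop (Suc j) qs0)))"
      unfolding cliques_Q[of qs0] concat_split[OF j(1), of blk]
      using IH(1) j(2) by (simp add: blk_def Un_assoc del: cliques.simps(2))
    have d1: "(?S \<union> U) \<inter> ?Q = {}" using SQ IH(2) by auto
    have d2: "c \<inter> ?Q = {}" if c_in: "c \<in> set (concat (map blk (take j qs0)) @ map ((\<union>) ?S) pre)
       \<union> set (map ((\<union>) ?S) suf @ concat (map blk (drop (Suc j) qs0)))" for c
    proof -
      consider (a) "c \<in> (\<lambda>d. ?S \<union> d) ` (set pre \<union> set suf)"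
        | (b) m where "m < length qs0" "m \<noteq> j" "c \<in> set (blk (qs0!m))"
      proof -
        assume a: "c \<in> (\<lambda>d. ?S \<union> d) ` (set pre \<union> set suf) \<Longrightarrow> thesis"
          and b: "\<And>m. m < length qs0 \<Longrightarrow> m \<noteq> j \<Longrightarrow> c \<in> set (blk (qs0!m)) \<Longrightarrow> thesis"
        from c_in have "c \<in> (\<lambda>d. ?S \<union> d) ` (set pre \<union> set suf) \<or>
          (\<exists>x. x \<in> set (take j qs0) \<union> set (drop (Suc j) qs0) \<and> c \<in> set (blk x))" by auto
        then show thesis
        proof (elim disjE exE conjE)
          fix x assume x: "x \<in> set (take j qs0) \<union> set (drop (Suc j) qs0)" "c \<in> set (blk x)"
          have "\<exists>m<length qs0. m \<noteq> j \<and> x = qs0!m" using x(1)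
            by (elim UnE) (erule in_take_nth', erule in_drop_nth')
          then show thesis using b x(2) by blast
        qed (rule a)
      qed
      then show ?thesis
      proof cases
        case a then show ?thesis using IH(3) SQ by auto
      next
        case (b m)
        have "c \<subseteq> fst (qs0!m) \<union> vso (snd (qs0!m))" using blk_sub b(3) .
        moreover have "vs t \<inter> fst (qs0!m) = {}" using qok1[OF okQ j(1) b(1)] Wj by simp
        moreover have "vs t \<inter> vso (snd (qs0!m)) = {}" using qok2[OF okQ j(1) b(1)] Wj b(2) by auto
        ultimately show ?thesis using Qt by blast
      qed
    qed
    have d3: "\<exists>pre' suf' qs. cliques T' = pre' @ map ((\<union>) (?S \<union> U)) (cliques (QNode qs)) @ suf'
          \<and> reorder (QNode ps) (QNode qs)" if "reorder (QNode qs0) T'" for T'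
      using that
    proof (cases rule: reorder.cases)
      case (reorderQ qs' rs)
      have R: "rel_prod (=) (rel_option reorder) ?p (qs'!j)" using reorderQ(2) j(1) list_all2_nthD by blast
      obtain a b where ab: "qs'!j = (a,b)" by (cases "qs'!j")
      obtain x y where xy: "?p = (x,y)" by (cases ?p)
      have ax: "a = x" and rb: "rel_option reorder y b" using R ab xy by simp_all
      have y: "y = Some t" using j(2) xy by simp
      obtain t' where "b = Some t'" "reorder t t'" using rb y by (cases b) auto
      then have t': "qs'!j = (?S, Some t')" "reorder t t'" using ab ax xy by simp_all
      obtain pre' suf' qs where qs: "cliques t' = pre' @ map ((\<union>) U) (cliques (QNode qs)) @ suf'"
         "reorder (QNode ps) (QNode qs)" using IH(4) t'(2) by blast
      have "(?S, Some t') \<in> set rs" using reorderQ(2,3) j(1) t'(1)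
        by (metis list_all2_lengthD nth_mem set_rev)
      then obtain r1 r2 where rs: "rs = r1 @ (?S, Some t') # r2" by (meson split_list)
      have "cliques T' = (concat (map blk r1) @ map ((\<union>) ?S) pre') @ map ((\<union>) (?S \<union> U)) (cliques (QNode qs)) @
         (map ((\<union>) ?S) suf' @ concat (map blk r2))"
        unfolding reorderQ(1) cliques_Q[of rs] using rs qs(1) by (simp add: blk_def Un_assoc del: cliques.simps(2))
      then show ?thesis using qs(2) by blast
    qed
    show ?thesis using eq d1 d2 d3 by blast
  qed
qed

lemma mset_concat_perm: "mset xs = mset ys \<Longrightarrow> mset (concat (map f xs)) = mset (concat (map f ys))"
proof -
  assume h: "mset xs = mset ys"
  have "mset (concat (map f xs)) = sum_mset (image_mset (mset \<circ> f) (mset xs))" for xs :: "'a list"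
    by (simp add: mset_concat sum_mset_sum_list[symmetric] mset_map[symmetric] del: mset_map)
  then show ?thesis using h by metis
qed

lemma list_all2_concat: "list_all2 (\<lambda>x y. mset (f x) = mset (g y)) xs ys \<Longrightarrow>
   mset (concat (map f xs)) = mset (concat (map g ys))"
  by (induction rule: list_all2_induct) simp_all

lemma blk_rel: "rel_prod (=) (rel_option (\<lambda>x y. R x y \<and> mset (cliques x) = mset (cliques y))) p q \<Longrightarrow>
   mset (blk p) = mset (blk q)"
proof -
  assume h: "rel_prod (=) (rel_option (\<lambda>x y. R x y \<and> mset (cliques x) = mset (cliques y))) p q"
  obtain a b where p: "p = (a,b)" by (cases p)
  obtain c d where q: "q = (c,d)" by (cases q)
  have ac: "a = c" and bd: "rel_option (\<lambda>x y. R x y \<and> mset (cliques x) = mset (cliques y)) b d"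
    using h p q by simp_all
  show ?thesis
  proof (cases b)
    case None
    then have "d = None" using bd by (cases d) auto
    then show ?thesis using None p q ac by (simp add: blk_def)
  next
    case (Some x)
    then obtain y where "d = Some y" "mset (cliques x) = mset (cliques y)" using bd by (cases d) auto
    then show ?thesis using Some p q ac by (simp add: blk_def mset_map)
  qed
qed

lemma mset_cliques_reorder: "reorder t t' \<Longrightarrow> mset (cliques t) = mset (cliques t')"
proof (induction rule: reorder.induct)
  case (reorderP cs ds es A)
  have l: "length cs = length ds" using reorderP(1) list_all2_lengthD by blast
  have l2: "length es = length ds" using reorderP(2) mset_eq_length by blast
  have m1: "mset (concat (map cliques cs)) = mset (concat (map cliques ds))"
    by (rule list_all2_concat) (rule list_all2_mono[OF reorderP(1)], simp)
  have m2: "mset (concat (map cliques es)) = mset (concat (map cliques ds))"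
    using mset_concat_perm[OF reorderP(2)] .
  show ?case
  proof (cases "cs = []")
    case True
    then have "es = []" using l l2 by simp
    then show ?thesis using True by simp
  next
    case False
    then have "es \<noteq> []" using l l2 by auto
    then show ?thesis using False m1 m2 by (simp add: mset_map)
  qed
next
  case (reorderQ ps qs rs)
  have m1: "mset (concat (map blk ps)) = mset (concat (map blk qs))"
    by (rule list_all2_concat) (rule list_all2_mono[OF reorderQ(1)], rule blk_rel)
  have m2: "mset (concat (map blk rs)) = mset (concat (map blk qs))"
    using reorderQ(2) mset_concat_perm[of "rev qs" qs blk] by auto
  show ?case unfolding cliques_Q using m1 m2 by simp
qed

lemma blk_reorder: "rel_prod (=) (rel_option reorder) p q \<Longrightarrow> mset (blk p) = mset (blk q)"
  by (rule blk_rel[of reorder]) (erule prod.rel_mono_strong, simp,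
      erule option.rel_mono_strong, simp add: mset_cliques_reorder)

lemma reorder_refl: "reorder t t"
proof (induction t rule: nodes.induct)
  case (1 A cs)
  have "list_all2 reorder cs cs" by (rule list.rel_refl_strong) (rule 1)
  then show ?case by (rule reorderP) simp
next
  case (2 ps)
  have "list_all2 (rel_prod (=) (rel_option reorder)) ps ps"
  proof (rule list.rel_refl_strong)
    fix p assume p: "p \<in> set ps"
    obtain a b where ab: "p = (a,b)" by (cases p)
    have "rel_option reorder b b"
    proof (rule option.rel_refl_strong)
      fix z assume "z \<in> set_option b"
      then have "snd p = Some z" using ab by simp
      then show "reorder z z" using 2 p by blast
    qed
    then show "rel_prod (=) (rel_option reorder) p p" using ab by simp
  qed
  then show ?case by (rule reorderQ) simp
qed

lemma consec_cb: "(\<forall>v i j m. i \<le> m \<and> m \<le> j \<and> j < length xs \<and> v \<in> xs ! i \<and> v \<in> xs ! j \<longrightarrow> v \<in> xs ! m)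
   \<longleftrightarrow> (\<forall>v. cb (map (\<lambda>c. v \<in> c) xs))"
proof
  assume L: "\<forall>v i j m. i \<le> m \<and> m \<le> j \<and> j < length xs \<and> v \<in> xs ! i \<and> v \<in> xs ! j \<longrightarrow> v \<in> xs ! m"
  show "\<forall>v. cb (map (\<lambda>c. v \<in> c) xs)"
    unfolding cb_idx idx_def
  proof (intro allI impI)
    fix v i m j assume h: "i \<le> m \<and> m \<le> j \<and> j < length (map (\<lambda>c. v \<in> c) xs) \<and>
       map (\<lambda>c. v \<in> c) xs ! i \<and> map (\<lambda>c. v \<in> c) xs ! j"
    then have il: "i < length xs" "m < length xs" "j < length xs" "i \<le> m" "m \<le> j" by auto
    have hi: "map (\<lambda>c. v \<in> c) xs ! i" and hj: "map (\<lambda>c. v \<in> c) xs ! j" using h by simp_all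
    have "v \<in> xs ! i" using hi il(1) by simp
    moreover have "v \<in> xs ! j" using hj il(3) by simp
    ultimately have "i \<le> m \<and> m \<le> j \<and> j < length xs \<and> v \<in> xs ! i \<and> v \<in> xs ! j" using il by simp
    then have "v \<in> xs ! m" using L by blast
    then show "map (\<lambda>c. v \<in> c) xs ! m" using il by simp
  qed
next
  assume R: "\<forall>v. cb (map (\<lambda>c. v \<in> c) xs)"
  show "\<forall>v i j m. i \<le> m \<and> m \<le> j \<and> j < length xs \<and> v \<in> xs ! i \<and> v \<in> xs ! j \<longrightarrow> v \<in> xs ! m"
  proof (intro allI impI)
    fix v i j m assume h: "i \<le> m \<and> m \<le> j \<and> j < length xs \<and> v \<in> xs ! i \<and> v \<in> xs ! j"
    have "idx (map (\<lambda>c. v \<in> c) xs)" using R cb_idx by blast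
    then have all: "\<forall>i m j. i \<le> m \<and> m \<le> j \<and> j < length xs \<and> map (\<lambda>c. v \<in> c) xs ! i \<and> map (\<lambda>c. v \<in> c) xs ! j
       \<longrightarrow> map (\<lambda>c. v \<in> c) xs ! m" unfolding idx_def by simp
    have il: "i < length xs" "m < length xs" "j < length xs" using h by auto
    have mi: "map (\<lambda>c. v \<in> c) xs ! i" using h il by simp
    have mj: "map (\<lambda>c. v \<in> c) xs ! j" using h il by simp
    have "i \<le> m \<and> m \<le> j \<and> j < length xs \<and> map (\<lambda>c. v \<in> c) xs ! i \<and> map (\<lambda>c. v \<in> c) xs ! j"
      using h mi mj by blast
    then have "map (\<lambda>c. v \<in> c) xs ! m" using all by blast
    then show "v \<in> xs ! m" using il by simp
  qed
qed

lemma distinct_concat_disj: "distinct (concat xs) \<Longrightarrow> i < length xs \<Longrightarrow> j < length xs \<Longrightarrow> i \<noteq> j \<Longrightarrow>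
   set (xs!i) \<inter> set (xs!j) = {}"
proof (induction xs arbitrary: i j)
  case Nil
  then show ?case by simp
next
  case (Cons x xs)
  show ?case
  proof (cases i)
    case 0
    then obtain j' where j: "j = Suc j'" using Cons(5) by (cases j) auto
    then have "xs!j' \<in> set xs" using Cons(4) by simp
    then have "set (xs!j') \<subseteq> set (concat xs)" by auto
    then show ?thesis using Cons(2) 0 j by auto
  next
    case (Suc i')
    show ?thesis
    proof (cases j)
      case 0
      have "xs!i' \<in> set xs" using Cons(3) Suc by simp
      then have "set (xs!i') \<subseteq> set (concat xs)" by auto
      then show ?thesis using Cons(2) 0 Suc by auto
    next
      case (Suc j')
      then show ?thesis using Cons.IH[of i' j'] Cons(2-5) \<open>i = Suc i'\<close> by simp
    qed
  qed
qed

lemma in_take_nth2: "y \<in> set (take n xs) \<Longrightarrow> \<exists>j<n. j < length xs \<and> y = xs!j"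
  by (auto simp: in_set_conv_nth)

lemma in_drop_nth2: "y \<in> set (drop n xs) \<Longrightarrow> \<exists>j\<ge>n. j < length xs \<and> y = xs!j"
  unfolding in_set_conv_nth
proof (elim exE conjE)
  fix k assume "k < length (drop n xs)" "drop n xs ! k = y"
  then show ?thesis by (intro exI[where x="n + k"]) auto
qed

lemma in_mid_nth: "y \<in> set (take n (drop m xs)) \<Longrightarrow> \<exists>j. m \<le> j \<and> j < m + n \<and> j < length xs \<and> y = xs!j"
  unfolding in_set_conv_nth
proof (elim exE conjE)
  fix k assume "k < length (take n (drop m xs))" "take n (drop m xs) ! k = y"
  then show ?thesis by (intro exI[where x="m + k"]) auto
qed

lemma list_all2_len_concat: "list_all2 (\<lambda>x y. length x = length y) xs ys \<Longrightarrow> length (concat xs) = length (concat ys)"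
  by (induction rule: list_all2_induct) simp_all

lemma blk_sup: "c \<in> set (blk p) \<Longrightarrow> fst p \<subseteq> c"
  by (auto simp: blk_def split: option.splits)

lemma const_repl: "\<forall>x\<in>set xs. x = t \<Longrightarrow> xs = replicate (length xs) t"
  by (induction xs) auto

lemma const_rev: "\<forall>x\<in>set xs. x = t \<Longrightarrow> rev xs = xs"
  by (metis const_repl rev_replicate)

lemma rev_blocks_cb:
  assumes "cb (concat (Y1 @ Y2 @ Y3))" "\<forall>y\<in>set Y2. \<exists>t. \<forall>x\<in>set y. x = t"
    "True \<in> set (concat Y1) \<and> True \<in> set (concat Y2) \<longrightarrow> False \<notin> set (concat Y2)"
    "True \<in> set (concat Y3) \<and> True \<in> set (concat Y2) \<longrightarrow> False \<notin> set (concat Y2)"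
  shows "cb (concat (Y1 @ rev Y2 @ Y3))"
proof -
  have "map rev (rev Y2) = rev Y2"
  proof (rule map_idI)
    fix y assume "y \<in> set (rev Y2)"
    then obtain t where "\<forall>x\<in>set y. x = t" using assms(2) by auto
    then show "rev y = y" by (rule const_rev)
  qed
  then have r: "concat (rev Y2) = rev (concat Y2)" by (simp add: rev_concat)
  have "cb (concat Y1 @ concat Y2 @ concat Y3)" using assms(1) by simp
  then have "cb (concat Y1 @ rev (concat Y2) @ concat Y3)"
    using assms(3,4) by (rule cb_rev_mid)
  then show ?thesis using r by simp
qed

lemma filter_none: "\<forall>x\<in>set xs. \<not> P x \<Longrightarrow> filter P xs = []"
  by (induction xs) auto

lemma single_block_cb:
  assumes "cb (concat bb)" "j0 < length bb" "\<forall>m<length bb. m \<noteq> j0 \<longrightarrow> True \<notin> set (bb!m)"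
    "mset Z = mset bb"
  shows "cb (concat Z)"
proof -
  have split: "bb = take j0 bb @ bb!j0 # drop (Suc j0) bb" using assms(2) by (rule id_take_nth_drop)
  have "concat bb = concat (take j0 bb) @ bb!j0 @ concat (drop (Suc j0) bb)"
    by (subst split) simp
  then have cbj: "cb (bb!j0)" using assms(1) cb_infix by metis
  have allcb: "\<forall>x\<in>set bb. cb x"
  proof
    fix x assume "x \<in> set bb"
    then obtain m where m: "m < length bb" "x = bb!m" by (auto simp: in_set_conv_nth)
    show "cb x"
    proof (cases "m = j0")
      case True then show ?thesis using m cbj by simp
    next
      case False
      then have "True \<notin> set x" using assms(3) m by simp
      then have "x = replicate (length x) False" by (rule allF)
      then show ?thesis unfolding cb_def by (metis append_Nil replicate_0)
    qed
  qed
  have f1: "filter (\<lambda>x. True \<in> set x) (take j0 bb) = []"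
  proof (rule filter_none, rule ballI)
    fix x assume "x \<in> set (take j0 bb)"
    then obtain m where "m < j0" "m < length bb" "x = bb!m" using in_take_nth2 by metis
    then show "\<not> True \<in> set x" using assms(3) by simp
  qed
  have f2: "filter (\<lambda>x. True \<in> set x) (drop (Suc j0) bb) = []"
  proof (rule filter_none, rule ballI)
    fix x assume "x \<in> set (drop (Suc j0) bb)"
    then obtain m where "m \<ge> Suc j0" "m < length bb" "x = bb!m" using in_drop_nth2 by metis
    then show "\<not> True \<in> set x" using assms(3) by simp
  qed
  have "length (filter (\<lambda>x. True \<in> set x) bb) \<le> 1"
    by (subst split) (simp add: f1 f2)
  moreover have "length (filter P Z) = length (filter P bb)" for P
    by (metis assms(4) mset_filter size_mset)
  ultimately have "length (filter (\<lambda>x. True \<in> set x) Z) \<le> 1" by simp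
  moreover have "\<forall>x\<in>set Z. cb x" using allcb assms(4) by (metis mset_eq_setD)
  ultimately show ?thesis using cb_concat_single by blast
qed

lemma map_in_U: "v \<in> U \<Longrightarrow> map (\<lambda>c. v \<in> c) (map ((\<union>) U) Y) = replicate (length Y) True"
  by (induction Y) auto

lemma map_notin_U: "v \<notin> U \<Longrightarrow> map (\<lambda>c. v \<in> c) (map ((\<union>) U) Y) = map (\<lambda>c. v \<in> c) Y"
  by (induction Y) auto

lemma map_notin_all: "\<forall>c\<in>set M. v \<notin> c \<Longrightarrow> map (\<lambda>c. v \<in> c) M = replicate (length M) False"
  by (induction M) auto

lemma three_split: "1 \<le> a \<Longrightarrow> a < b \<Longrightarrow> xs = take (a-1) xs @ take (b+1-a) (drop (a-1) xs) @ drop b xs"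
proof -
  assume ab: "1 \<le> a" "a < b"
  have e: "b+1-a + (a-1) = b" using ab by simp
  have d: "drop (a-1) xs = take (b+1-a) (drop (a-1) xs) @ drop b xs"
    by (metis append_take_drop_id drop_drop e)
  show ?thesis by (rule sym, subst d[symmetric]) simp
qed

lemma vsQ_nth: "v \<in> vs (QNode ps) \<Longrightarrow> \<exists>j<length ps. v \<in> fst (ps!j) \<union> vso (snd (ps!j))"
proof -
  assume "v \<in> vs (QNode ps)"
  then have "\<exists>p\<in>set ps. v \<in> fst p \<union> vso (snd p)" by (simp add: vso_def)
  then show ?thesis by (metis in_set_conv_nth)
qed

lemma consec_new:
  assumes okQ: "node_ok (QNode ps)"
    and L: "L = pre @ map ((\<union>) U) (concat (map blk ps)) @ suf"
    and UQ: "U \<inter> vs (QNode ps) = {}"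
    and PS: "\<forall>c \<in> set pre \<union> set suf. c \<inter> vs (QNode ps) = {}"
    and cbL: "cb (map (\<lambda>c. v \<in> c) L)"
    and H1: "\<forall>v. v \<in> qsec ps (a-1) \<and> v \<in> qsec ps a \<longrightarrow> v \<in> qsec ps b"
    and H2: "\<forall>v. v \<in> qsec ps b \<and> v \<in> qsec ps (b+1) \<longrightarrow> v \<in> qsec ps a"
    and ab: "1 \<le> a" "a < b" "b \<le> length ps"
  shows "cb (map (\<lambda>c. v \<in> c) (pre @ map ((\<union>) U) (concat (take (a-1) (map blk ps) @
            rev (take (b+1-a) (drop (a-1) (map blk ps))) @ drop b (map blk ps))) @ suf))"
proof -
  define k where "k = length ps"
  define Bs where "Bs = map blk ps"
  define X1 where "X1 = take (a-1) Bs"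
  define X2 where "X2 = take (b+1-a) (drop (a-1) Bs)"
  define X3 where "X3 = drop b Bs"
  define Mo where "Mo = concat Bs"
  define Mn where "Mn = concat (X1 @ rev X2 @ X3)"
  have split: "Bs = X1 @ X2 @ X3" unfolding X1_def X2_def X3_def by (rule three_split[OF ab(1,2)])
  have msetM: "mset Mn = mset Mo"
    using mset_concat_perm[of "X1 @ rev X2 @ X3" "X1 @ X2 @ X3" id] unfolding Mn_def Mo_def
    by (subst split) simp
  have lenM: "length Mn = length Mo" using msetM mset_eq_length by blast
  have setM: "set Mn = set Mo" using msetM mset_eq_setD by blast
  have cbLo: "cb (map (\<lambda>c. v \<in> c) (pre @ map ((\<union>) U) Mo @ suf))" using cbL L by (simp add: Mo_def Bs_def)
  have MoQ: "c \<subseteq> vs (QNode ps)" if "c \<in> set Mo" for c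
    using that cliques_sub[of c "QNode ps"] unfolding Mo_def Bs_def cliques_Q[symmetric] by blast
  have goal: "cb (map (\<lambda>c. v \<in> c) (pre @ map ((\<union>) U) Mn @ suf))"
  proof (cases "v \<in> U")
    case True
    have "map (\<lambda>c. v \<in> c) (pre @ map ((\<union>) U) Mn @ suf) = map (\<lambda>c. v \<in> c) (pre @ map ((\<union>) U) Mo @ suf)"
      by (simp only: map_append map_in_U[OF True] lenM)
    then show ?thesis using cbLo by simp
  next
    case nU: False
    show ?thesis
    proof (cases "v \<in> vs (QNode ps)")
      case False
      have "map (\<lambda>c. v \<in> c) M = replicate (length M) False" if "set M = set Mo" for M
        by (rule map_notin_all) (use that MoQ False in blast)
      then have "map (\<lambda>c. v \<in> c) Mn = map (\<lambda>c. v \<in> c) Mo" using setM lenM by metis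
      then have "map (\<lambda>c. v \<in> c) (pre @ map ((\<union>) U) Mn @ suf) = map (\<lambda>c. v \<in> c) (pre @ map ((\<union>) U) Mo @ suf)"
        by (simp only: map_append map_notin_U[OF nU])
      then show ?thesis using cbLo by simp
    next
      case inQ: True
      have pre0: "map (\<lambda>c. v \<in> c) pre = replicate (length pre) False"
        by (rule map_notin_all) (use PS inQ in blast)
      have suf0: "map (\<lambda>c. v \<in> c) suf = replicate (length suf) False"
        by (rule map_notin_all) (use PS inQ in blast)
      have "cb (replicate (length pre) False @ map (\<lambda>c. v \<in> c) Mo @ replicate (length suf) False)"
        using cbLo by (simp only: map_append map_notin_U[OF nU] pre0 suf0)
      then have cbMo: "cb (map (\<lambda>c. v \<in> c) Mo)" by (rule cb_infix)
      define bb where "bb = map (map (\<lambda>c. v \<in> c)) Bs"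
      define Y1 where "Y1 = take (a-1) bb"
      define Y2 where "Y2 = take (b+1-a) (drop (a-1) bb)"
      define Y3 where "Y3 = drop b bb"
      have Mobb: "map (\<lambda>c. v \<in> c) Mo = concat bb" by (simp add: Mo_def bb_def map_concat)
      have Mnbb: "map (\<lambda>c. v \<in> c) Mn = concat (Y1 @ rev Y2 @ Y3)"
        by (simp add: Mn_def bb_def Y1_def Y2_def Y3_def X1_def X2_def X3_def map_concat take_map drop_map rev_map)
      have bbsplit: "bb = Y1 @ Y2 @ Y3" unfolding Y1_def Y2_def Y3_def by (rule three_split[OF ab(1,2)])
      have lbb: "length bb = k" by (simp add: bb_def Bs_def k_def)
      have bbm: "bb!m = map (\<lambda>c. v \<in> c) (blk (ps!m))" if "m < k" for m
        using that by (simp add: bb_def Bs_def k_def)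
      have blkprop: "fst (ps!m) \<subseteq> c \<and> c \<subseteq> fst (ps!m) \<union> vso (snd (ps!m))"
        if "c \<in> set (blk (ps!m))" for m c
        using that blk_sup blk_sub by blast
      obtain j0 where j0: "j0 < k" "v \<in> fst (ps!j0) \<union> vso (snd (ps!j0))"
        using vsQ_nth[OF inQ] unfolding k_def by blast
      have cbbb: "cb (concat bb)" using cbMo Mobb by simp
      have "cb (concat (Y1 @ rev Y2 @ Y3))"
      proof (cases "v \<in> fst (ps!j0)")
        case False
        then have inW: "v \<in> vso (snd (ps!j0))" using j0 by blast
        have nS: "v \<notin> fst (ps!m)" if "m < k" for m
          using qok1[OF okQ, of j0 m] j0(1) that inW unfolding k_def by blast
        have nW: "v \<notin> vso (snd (ps!m))" if "m < k" "m \<noteq> j0" for m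
          using qok2[OF okQ, of j0 m] j0(1) that inW unfolding k_def by blast
        have noT: "\<forall>m<length bb. m \<noteq> j0 \<longrightarrow> True \<notin> set (bb!m)"
        proof (intro allI impI)
          fix m assume m: "m < length bb" "m \<noteq> j0"
          show "True \<notin> set (bb!m)"
          proof
            assume "True \<in> set (bb!m)"
            then obtain c where "c \<in> set (blk (ps!m))" "v \<in> c" using bbm m lbb by auto
            then show False using blkprop nS nW m lbb by blast
          qed
        qed
        show ?thesis
          by (rule single_block_cb[OF cbbb _ noT]) (use j0 lbb bbsplit in simp_all)
      next
        case inS: True
        have nW: "v \<notin> vso (snd (ps!m))" if "m < k" for m
          using qok1[OF okQ, of m j0] j0(1) that inS unfolding k_def by blast
        have const: "\<forall>x\<in>set (bb!m). x = (v \<in> fst (ps!m))" if mk: "m < k" for m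
        proof
          fix x assume "x \<in> set (bb!m)"
          then have "x \<in> set (map (\<lambda>c. v \<in> c) (blk (ps!m)))" using bbm[OF mk] by simp
          then obtain c where c: "c \<in> set (blk (ps!m))" "x = (v \<in> c)" by auto
          then show "x = (v \<in> fst (ps!m))" using blkprop[OF c(1)] nW[OF mk] by blast
        qed
        have "v \<in> (\<Union>i\<in>{1..k}. qsec ps i)"
          using j0 inS qsec_Suc[of j0 ps] unfolding k_def by force
        moreover have "\<forall>v \<in> (\<Union>i\<in>{1..k}. qsec ps i). \<exists>l r. 1 \<le> l \<and> l < r \<and> r \<le> k \<and>
            (\<forall>i\<in>{1..k}. v \<in> qsec ps i \<longleftrightarrow> l \<le> i \<and> i \<le> r)"
          using okQ unfolding k_def by (simp add: Let_def)
        ultimately obtain l r where lr: "1 \<le> l" "l < r" "r \<le> k"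
          "\<forall>i\<in>{1..k}. v \<in> qsec ps i \<longleftrightarrow> l \<le> i \<and> i \<le> r" by blast
        have qs: "v \<in> qsec ps i \<longleftrightarrow> l \<le> i \<and> i \<le> r" if "1 \<le> i" "i \<le> k" for i
          using lr(4) that by auto
        have inS': "v \<in> fst (ps!m) \<longleftrightarrow> l \<le> Suc m \<and> Suc m \<le> r" if "m < k" for m
          using qs[of "Suc m"] that qsec_Suc[of m ps] unfolding k_def by simp
        have elem: "\<exists>m<k. y = bb!m" if "y \<in> set bb" for y
          using that lbb by (auto simp: in_set_conv_nth)
        have TA: "l \<le> a - 1" if h: "True \<in> set (concat Y1)"
        proof -
          obtain y where y: "y \<in> set Y1" "True \<in> set y" using h by auto
          from in_take_nth2[OF y(1)[unfolded Y1_def]] obtain m where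
            m: "m < a - 1" "m < length bb" "y = bb!m" by auto
          have "v \<in> fst (ps!m)" using const[of m] m y(2) lbb by auto
          then show ?thesis using inS'[of m] m lbb by simp
        qed
        have TB: "\<exists>m. a - 1 \<le> m \<and> m < b \<and> l \<le> Suc m \<and> Suc m \<le> r" if h: "True \<in> set (concat Y2)"
        proof -
          obtain y where y: "y \<in> set Y2" "True \<in> set y" using h by auto
          from in_mid_nth[OF y(1)[unfolded Y2_def]] obtain m where
            m: "a - 1 \<le> m" "m < a - 1 + (b + 1 - a)" "m < length bb" "y = bb!m" by auto
          have "v \<in> fst (ps!m)" using const[of m] m y(2) lbb by auto
          then show ?thesis using inS'[of m] m lbb ab by (intro exI[of _ m]) simp
        qed
        have FB: "\<exists>m. a - 1 \<le> m \<and> m < b \<and> \<not> (l \<le> Suc m \<and> Suc m \<le> r)" if h: "False \<in> set (concat Y2)"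
        proof -
          obtain y where y: "y \<in> set Y2" "False \<in> set y" using h by auto
          from in_mid_nth[OF y(1)[unfolded Y2_def]] obtain m where
            m: "a - 1 \<le> m" "m < a - 1 + (b + 1 - a)" "m < length bb" "y = bb!m" by auto
          have "v \<notin> fst (ps!m)" using const[of m] m y(2) lbb by auto
          then show ?thesis using inS'[of m] m lbb ab by (intro exI[of _ m]) simp
        qed
        have TC: "b + 1 \<le> r" if h: "True \<in> set (concat Y3)"
        proof -
          obtain y where y: "y \<in> set Y3" "True \<in> set y" using h by auto
          from in_drop_nth2[OF y(1)[unfolded Y3_def]] obtain m where
            m: "b \<le> m" "m < length bb" "y = bb!m" by auto
          have "v \<in> fst (ps!m)" using const[of m] m y(2) lbb by auto
          then show ?thesis using inS'[of m] m lbb by simp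
        qed
        have c1: "True \<in> set (concat Y1) \<and> True \<in> set (concat Y2) \<longrightarrow> False \<notin> set (concat Y2)"
        proof (intro impI notI, elim conjE)
          assume a1: "True \<in> set (concat Y1)" and a2: "True \<in> set (concat Y2)" and a3: "False \<in> set (concat Y2)"
          have la: "l \<le> a - 1" using TA a1 .
          obtain m where m: "a - 1 \<le> m" "m < b" "l \<le> Suc m" "Suc m \<le> r" using TB a2 by blast
          have ar: "a \<le> r" using m ab by linarith
          have a1: "1 \<le> a - 1" using la lr by linarith
          have ak: "a \<le> k" using ab unfolding k_def by linarith
          have "v \<in> qsec ps (a-1)" using qs[of "a-1"] la a1 ak ar by simp
          moreover have "v \<in> qsec ps a"
          proof -
            have "l \<le> a" using la by linarith
            then show ?thesis using qs[of a] ab(1) ak ar by simp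
          qed
          ultimately have "v \<in> qsec ps b" using H1 by blast
          then have rb: "b \<le> r" using qs[of b] ab lr unfolding k_def by simp
          obtain m' where m': "a - 1 \<le> m'" "m' < b" "\<not> (l \<le> Suc m' \<and> Suc m' \<le> r)" using FB a3 by blast
          show False using m' la rb by simp
        qed
        have c2: "True \<in> set (concat Y3) \<and> True \<in> set (concat Y2) \<longrightarrow> False \<notin> set (concat Y2)"
        proof (intro impI notI, elim conjE)
          assume a1: "True \<in> set (concat Y3)" and a2: "True \<in> set (concat Y2)" and a3: "False \<in> set (concat Y2)"
          have rb: "b + 1 \<le> r" using TC a1 .
          obtain m where m: "a - 1 \<le> m" "m < b" "l \<le> Suc m" "Suc m \<le> r" using TB a2 by blast
          have lb: "l \<le> b" using m by linarith
          have bk: "b + 1 \<le> k" using rb lr by linarith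
          have "v \<in> qsec ps b" using qs[of b] rb lb bk ab by simp
          moreover have "v \<in> qsec ps (b+1)" using qs[of "b+1"] rb lb bk by simp
          ultimately have "v \<in> qsec ps a" using H2 by blast
          then have la: "l \<le> a" using qs[of a] ab lr unfolding k_def by simp
          obtain m' where m': "a - 1 \<le> m'" "m' < b" "\<not> (l \<le> Suc m' \<and> Suc m' \<le> r)" using FB a3 by blast
          show False using m' la rb by simp
        qed
        have cY2: "\<forall>y\<in>set Y2. \<exists>t. \<forall>x\<in>set y. x = t"
        proof
          fix y assume "y \<in> set Y2"
          then have "y \<in> set bb" using bbsplit by (metis Un_iff set_append)
          then obtain m where "m < k" "y = bb!m" using elem by blast
          then show "\<exists>t. \<forall>x\<in>set y. x = t" using const by blast
        qed
        show ?thesis by (rule rev_blocks_cb[OF _ cY2 c1 c2]) (use cbbb bbsplit in simp)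
      qed
      then have "cb (map (\<lambda>c. v \<in> c) Mn)" using Mnbb by simp
      then have "cb (replicate (length pre) False @ map (\<lambda>c. v \<in> c) Mn @ replicate (length suf) False)"
        by (rule cb_pad)
      then show ?thesis by (simp only: map_append map_notin_U[OF nU] pre0 suf0)
    qed
  qed
  then show ?thesis by (simp add: Mn_def X1_def X2_def X3_def Bs_def)
qed

lemma mid_eq:
  assumes d: "distinct (p1 @ m1 @ s1)" and e: "p1 @ m1 @ s1 = p2 @ m2 @ s2"
    and s: "set m1 = set m2" and ne: "m1 \<noteq> []"
  shows "m1 = m2"
proof -
  have d2: "distinct (p2 @ m2 @ s2)" using d e by simp
  have ne2: "m2 \<noteq> []" using s ne by auto
  have len: "length p1 = length p2"
  proof (rule ccontr)
    assume "length p1 \<noteq> length p2"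
    then consider "length p1 < length p2" | "length p2 < length p1" by linarith
    then show False
    proof cases
      case 1
      have "(p1 @ m1 @ s1) ! length p1 = m1 ! 0" using ne by (simp add: nth_append)
      moreover have "(p2 @ m2 @ s2) ! length p1 = p2 ! length p1" using 1 by (simp add: nth_append)
      ultimately have "m1 ! 0 = p2 ! length p1" using e by simp
      moreover have "m1 ! 0 \<in> set m2"
      proof -
        have "m1 ! 0 \<in> set m1" using ne by simp
        then show ?thesis using s by simp
      qed
      moreover have "p2 ! length p1 \<in> set p2" using 1 by simp
      moreover have "set p2 \<inter> set m2 = {}"
      proof -
        have "set p2 \<inter> (set m2 \<union> set s2) = {}" using d2 by simp
        then show ?thesis by blast
      qed
      ultimately show False by (metis disjoint_iff)
    next
      case 2
      have "(p2 @ m2 @ s2) ! length p2 = m2 ! 0" using ne2 by (simp add: nth_append)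
      moreover have "(p1 @ m1 @ s1) ! length p2 = p1 ! length p2" using 2 by (simp add: nth_append)
      ultimately have "m2 ! 0 = p1 ! length p2" using e by simp
      moreover have "m2 ! 0 \<in> set m1"
      proof -
        have "m2 ! 0 \<in> set m2" using ne2 by simp
        then show ?thesis using s by simp
      qed
      moreover have "p1 ! length p2 \<in> set p1" using 2 by simp
      moreover have "set p1 \<inter> set m1 = {}"
      proof -
        have "set p1 \<inter> (set m1 \<union> set s1) = {}" using d by simp
        then show ?thesis by blast
      qed
      ultimately show False by (metis disjoint_iff)
    qed
  qed
  then have ms: "m1 @ s1 = m2 @ s2" using e by simp
  have dm1: "distinct m1" using d by simp
  have dm2: "distinct m2" using d2 by simp
  have "length m1 = length m2"
    using distinct_card[OF dm1] distinct_card[OF dm2] s by simp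
  then show ?thesis using ms by simp
qed

lemma hd_concat_Cons: "x \<noteq> [] \<Longrightarrow> hd (concat (x # xs)) = hd x"
  by simp

lemma final_contra:
  assumes okQ: "node_ok (QNode ps)"
    and NE: "\<forall>j<length ps. blk (ps!j) \<noteq> []"
    and DIST: "distinct (map ((\<union>) U) (concat (map blk ps)))"
    and REL: "list_all2 (rel_prod (=) (rel_option reorder)) ps qs'"
    and QS: "qs = qs' \<or> qs = rev qs'"
    and EQ: "map ((\<union>) U) (concat (take (a-1) (map blk ps) @ rev (take (b+1-a) (drop (a-1) (map blk ps)))
              @ drop b (map blk ps))) = map ((\<union>) U) (concat (map blk qs))"
    and ab: "1 \<le> a" "a < b" "b \<le> length ps" "(a, b) \<noteq> (1, length ps)"
  shows False
proof -
  define k where "k = length ps"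
  have k3: "k \<ge> 3" using okQ unfolding k_def by (simp add: Let_def)
  define D where "D = map (map ((\<union>) U)) (map blk ps)"
  define D' where "D' = map (map ((\<union>) U)) (map blk qs')"
  have lenD: "length D = k" by (simp add: D_def k_def)
  have lenq: "length qs' = k" using REL list_all2_lengthD unfolding k_def by metis
  have lenD': "length D' = k" by (simp add: D'_def lenq)
  have dD: "distinct (concat D)" using DIST by (simp add: D_def map_concat)
  have DJ: "set (D!i) \<inter> set (D!j) = {}" if "i < k" "j < k" "i \<noteq> j" for i j
    using distinct_concat_disj[OF dD] that lenD by simp
  have NED: "D!j \<noteq> []" if "j < k" for j using NE that by (simp add: D_def k_def)
  have MS: "mset (D'!j) = mset (D!j)" if "j < k" for j
  proof -
    have "mset (blk (ps!j)) = mset (blk (qs'!j))"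
      using blk_reorder list_all2_nthD[OF REL] that unfolding k_def by blast
    then show ?thesis using that lenq by (simp add: D_def D'_def k_def mset_map)
  qed
  have SETD: "set (D'!j) = set (D!j)" if "j < k" for j using MS[OF that] mset_eq_setD by blast
  have LEND: "length (D'!j) = length (D!j)" if "j < k" for j using MS[OF that] mset_eq_length by blast
  have EQ': "concat (take (a-1) D @ rev (take (b+1-a) (drop (a-1) D)) @ drop b D)
      = concat (map (map ((\<union>) U)) (map blk qs))"
    using EQ unfolding D_def by (simp only: map_concat take_map drop_map rev_map map_append)
  have bk: "b - 1 < k" "a - 1 < k" using ab unfolding k_def by auto
  have rev2: "rev (take (b+1-a) (drop (a-1) D)) = D!(b-1) # rev (take (b-a) (drop (a-1) D))"
  proof -
    have s: "b + 1 - a = Suc (b - a)" using ab by simp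
    have l: "b - a < length (drop (a-1) D)" using ab lenD unfolding k_def by simp
    have n: "drop (a-1) D ! (b - a) = D!(b-1)" using ab lenD l by simp
    show ?thesis unfolding s take_Suc_conv_app_nth[OF l] n by simp
  qed
  have hb: "hd (D!(b-1)) \<in> set (D!(b-1))" using NED[OF bk(1)] by simp
  show False
  proof (cases "qs = qs'")
    case True
    have RHS: "concat (map (map ((\<union>) U)) (map blk qs)) = concat (take (a-1) D') @ concat (drop (a-1) D')"
      unfolding True D'_def[symmetric] by (simp flip: concat_append)
    have la: "list_all2 (\<lambda>x y. length x = length y) D D'"
      by (rule list_all2_all_nthI) (use lenD lenD' LEND in simp_all)
    have lt: "length (concat (take (a-1) D)) = length (concat (take (a-1) D'))"
      by (rule list_all2_len_concat) (rule list_all2_takeI[OF la])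
    have "concat (take (a-1) D) @ concat (rev (take (b+1-a) (drop (a-1) D)) @ drop b D)
       = concat (take (a-1) D') @ concat (drop (a-1) D')"
      using EQ' RHS by simp
    then have E2: "concat (rev (take (b+1-a) (drop (a-1) D)) @ drop b D) = concat (drop (a-1) D')"
      using lt by simp
    have dr: "drop (a-1) D' = D'!(a-1) # drop a D'"
      using Cons_nth_drop_Suc[of "a-1" D'] bk lenD' ab by simp
    have ne': "D'!(a-1) \<noteq> []" using LEND[OF bk(2)] NED[OF bk(2)] by auto
    have "hd (concat (rev (take (b+1-a) (drop (a-1) D)) @ drop b D)) = hd (concat (drop (a-1) D'))"
      using E2 by (rule arg_cong)
    then have "hd (D!(b-1)) = hd (D'!(a-1))"
      unfolding rev2 dr using NED[OF bk(1)] ne' by (simp add: hd_append2)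
    then have "hd (D!(b-1)) \<in> set (D!(a-1))" using ne' SETD[OF bk(2)] by (metis hd_in_set)
    moreover have "b - 1 \<noteq> a - 1" using ab by linarith
    ultimately show False using DJ[of "b-1" "a-1"] hb bk by blast
  next
    case False
    then have qrev: "qs = rev qs'" using QS by simp
    have kk: "k - 1 < k" using k3 by simp
    have revD: "rev D' = D'!(k-1) # rev (take (k-1) D')"
    proof -
      have "D' = take (k-1) D' @ [D'!(k-1)]"
        using take_Suc_conv_app_nth[of "k-1" D'] lenD' kk by simp
      then show ?thesis by (metis rev.simps(2) rev_rev_ident rev_append rev_singleton_conv) 
    qed
    have RHS: "concat (map (map ((\<union>) U)) (map blk qs)) = concat (rev D')"
      unfolding qrev D'_def by (simp add: rev_map)
    have ne': "D'!(k-1) \<noteq> []" using LEND[OF kk] NED[OF kk] by auto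
    have hR: "hd (concat (rev D')) \<in> set (D!(k-1))"
      unfolding revD using ne' SETD[OF kk] by (simp add: hd_in_set) (metis hd_in_set)
    show False
    proof (cases "a = 1")
      case True
      have "hd (concat (take (a-1) D @ rev (take (b+1-a) (drop (a-1) D)) @ drop b D)) = hd (D!(b-1))"
        using True NED[OF bk(1)] unfolding rev2 by simp
      then have "hd (D!(b-1)) \<in> set (D!(k-1))" using EQ' RHS hR by simp
      moreover have "b - 1 \<noteq> k - 1" using ab True bk unfolding k_def by auto
      ultimately show False using DJ[of "b-1" "k-1"] hb bk kk by auto
    next
      case False
      have D0: "D = D!0 # drop 1 D" using Cons_nth_drop_Suc[of 0 D] lenD k3 by simp
      have "take (a-1) D = D!0 # take (a-2) (drop 1 D)"
      proof -
        have "a - 1 = Suc (a - 2)" using False ab by simp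
        then show ?thesis by (subst D0) simp
      qed
      then have "hd (concat (take (a-1) D @ rev (take (b+1-a) (drop (a-1) D)) @ drop b D)) = hd (D!0)"
        using NED[of 0] k3 by simp
      then have "hd (D!0) \<in> set (D!(k-1))" using EQ' RHS hR by simp
      moreover have "hd (D!0) \<in> set (D!0)" using NED[of 0] k3 by simp
      ultimately show False using DJ[of 0 "k-1"] k3 by auto
    qed
  qed
qed

theorem mainTheorem13:
  fixes V :: "'v set" and E :: "('v \<times> 'v) set" and T :: "'v mpq"
    and ps :: "('v set \<times> 'v mpq option) list" and a b :: nat
  assumes "interval_graph V E"
    and "is_MPQ_tree V E T"
    and "QNode ps \<in> nodes T"
    and "1 \<le> a" and "a < b" and "b \<le> length ps"
    and "(a, b) \<noteq> (1, length ps)"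
  shows "\<exists>v. v \<in> ((qsec ps (a - 1) \<inter> qsec ps a) - qsec ps b)
                 \<union> ((qsec ps b \<inter> qsec ps (b + 1)) - qsec ps a)"
proof (rule ccontr)
  assume neg: "\<not> ?thesis"
  have H1: "\<forall>v. v \<in> qsec ps (a-1) \<and> v \<in> qsec ps a \<longrightarrow> v \<in> qsec ps b" using neg by blast
  have H2: "\<forall>v. v \<in> qsec ps b \<and> v \<in> qsec ps (b+1) \<longrightarrow> v \<in> qsec ps a" using neg by blast
  have okall: "\<forall>t\<in>nodes T. node_ok t" and distL: "distinct (cliques T)"
    and setL: "set (cliques T) = max_cliques V E"
    and reoEq: "{cliques T' | T'. reorder T T'} = {xs. consec_clique_order V E xs}"
    using assms(2) unfolding is_MPQ_tree_def by blast+
  obtain pre suf U where Leq: "cliques T = pre @ map ((\<union>) U) (cliques (QNode ps)) @ suf"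
    and UQ: "U \<inter> vs (QNode ps) = {}" and PS: "\<forall>c \<in> set pre \<union> set suf. c \<inter> vs (QNode ps) = {}"
    and REO: "\<forall>T'. reorder T T' \<longrightarrow> (\<exists>pre' suf' qs. cliques T' = pre' @ map ((\<union>) U) (cliques (QNode qs)) @ suf'
          \<and> reorder (QNode ps) (QNode qs))"
    using decomp[OF assms(3) okall] by (elim exE conjE) iprover
  have okQ: "node_ok (QNode ps)" using okall assms(3) by blast
  have nodesQ: "nodes (QNode ps) \<subseteq> nodes T" using nodes_trans[OF assms(3)] .
  have "cliques T \<in> {cliques T' | T'. reorder T T'}" using reorder_refl by blast
  then have consL: "consec_clique_order V E (cliques T)" using reoEq by blast
  have cbL: "\<forall>v. cb (map (\<lambda>c. v \<in> c) (cliques T))"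
    using consL unfolding consec_clique_order_def consec_cb by blast
  define Bs where "Bs = map blk ps"
  define Mn where "Mn = concat (take (a-1) Bs @ rev (take (b+1-a) (drop (a-1) Bs)) @ drop b Bs)"
  define L' where "L' = pre @ map ((\<union>) U) Mn @ suf"
  have Leq': "cliques T = pre @ map ((\<union>) U) (concat (map blk ps)) @ suf" using Leq by (simp only: cliques_Q)
  have cbL': "cb (map (\<lambda>c. v \<in> c) L')" for v
    using consec_new[OF okQ Leq' UQ PS cbL[rule_format, of v] H1 H2 assms(4,5,6)]
    unfolding L'_def Mn_def Bs_def .
  have msetMn: "mset Mn = mset (concat Bs)"
  proof -
    have sp: "Bs = take (a-1) Bs @ take (b+1-a) (drop (a-1) Bs) @ drop b Bs"
      by (rule three_split[OF assms(4,5)])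
    show ?thesis
      using mset_concat_perm[of "take (a-1) Bs @ rev (take (b+1-a) (drop (a-1) Bs)) @ drop b Bs"
          "take (a-1) Bs @ take (b+1-a) (drop (a-1) Bs) @ drop b Bs" id]
      unfolding Mn_def by (subst sp) simp
  qed
  have msetL: "mset L' = mset (cliques T)"
    unfolding L'_def Leq' using msetMn by (simp add: Bs_def mset_map)
  have distL': "distinct L'" using msetL distL mset_eq_imp_distinct_iff by blast
  have setL': "set L' = max_cliques V E" using msetL setL mset_eq_setD by metis
  have "consec_clique_order V E L'"
    unfolding consec_clique_order_def consec_cb using distL' setL' cbL' by blast
  then have "L' \<in> {cliques T' | T'. reorder T T'}" using reoEq by blast
  then obtain T' where T': "reorder T T'" "cliques T' = L'" by blast
  obtain pre' suf' qs where qs: "cliques T' = pre' @ map ((\<union>) U) (cliques (QNode qs)) @ suf'"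
      "reorder (QNode ps) (QNode qs)" using REO[rule_format, OF T'(1)] by (elim exE conjE) iprover
  obtain qs' where REL: "list_all2 (rel_prod (=) (rel_option reorder)) ps qs'" and QS: "qs = qs' \<or> qs = rev qs'"
    using qs(2) by (cases rule: reorder.cases) auto
  have msQ: "mset (cliques (QNode qs)) = mset (cliques (QNode ps))"
    using mset_cliques_reorder[OF qs(2)] by simp
  have neQ: "cliques (QNode ps) \<noteq> []" using cliques_ne okall nodesQ by blast
  have setMn: "set Mn = set (cliques (QNode ps))" using msetMn mset_eq_setD unfolding Bs_def cliques_Q by metis
  have "map ((\<union>) U) Mn = map ((\<union>) U) (cliques (QNode qs))"
  proof (rule mid_eq)
    show "distinct (pre @ map ((\<union>) U) Mn @ suf)" using distL' unfolding L'_def .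
    show "pre @ map ((\<union>) U) Mn @ suf = pre' @ map ((\<union>) U) (cliques (QNode qs)) @ suf'"
      using T'(2) qs(1) unfolding L'_def by simp
    show "set (map ((\<union>) U) Mn) = set (map ((\<union>) U) (cliques (QNode qs)))"
      using setMn msQ mset_eq_setD by (metis set_map)
    have "length Mn = length (cliques (QNode ps))" using msetMn mset_eq_length unfolding Bs_def cliques_Q by metis
    then have "Mn \<noteq> []" using neQ by (metis length_0_conv)
    then show "map ((\<union>) U) Mn \<noteq> []" by simp
  qed
  then have EQ: "map ((\<union>) U) (concat (take (a-1) (map blk ps) @ rev (take (b+1-a) (drop (a-1) (map blk ps)))
              @ drop b (map blk ps))) = map ((\<union>) U) (concat (map blk qs))"
    unfolding Mn_def Bs_def cliques_Q .
  have DIST: "distinct (map ((\<union>) U) (concat (map blk ps)))" using distL unfolding Leq' by simp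
  have NE: "\<forall>j<length ps. blk (ps!j) \<noteq> []"
  proof (intro allI impI)
    fix j assume j: "j < length ps"
    show "blk (ps!j) \<noteq> []"
    proof (cases "snd (ps!j)")
      case None then show ?thesis by (simp add: blk_def)
    next
      case (Some t)
      have "nodes t \<subseteq> nodes (QNode ps)" using nodes_Q_child[of "ps!j" ps t] j Some by simp
      then have "\<forall>s\<in>nodes t. node_ok s" using okall nodesQ by blast
      then have "cliques t \<noteq> []" by (rule cliques_ne)
      then show ?thesis using Some by (simp add: blk_def)
    qed
  qed
  show False by (rule final_contra[OF okQ NE DIST REL QS EQ assms(4-7)])
qed

end
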